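(* Let $F\in\mathrm{Lip}_{\rm loc}(\mathbb{R})$ and suppose $F$ is linear (affine) on an interval $(a,b)\subset\mathbb{R}$ for some $a<b$. Then there exists an initial datum $g\in\mathrm{Lip}(\mathbb{R})$ and a constant $c_0>0$ depending only on $F$ and $g$ such that for every $\varepsilon\in(0,\tfrac14)$, \[ |u^\varepsilon(0,1)-u(0,1)|\ge c_0\sqrt{\varepsilon}, \] where $u^\varepsilon$ is the viscosity solution of $u^\varepsilon_t+F(u^\varepsilon_x)=\varepsilon u^\varepsilon_{xx}$ in $\mathbb{R}\times(0,\infty)$, $u^\varepsilon(\cdot,0)=g$, and $u$ is the viscosity solution of $u_t+F(u_x)=0$ in $\mathbb{R}\times(0,\infty)$, $u(\cdot,0)=g$. *)

theory Defs
  imports "HOL-Analysis.Analysis"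
begin

definition test_fun ::
  "(real \<times> real \<Rightarrow> real) \<Rightarrow> (real \<times> real \<Rightarrow> real) \<Rightarrow> (real \<times> real \<Rightarrow> real)
   \<Rightarrow> (real \<times> real \<Rightarrow> real) \<Rightarrow> bool" where
  "test_fun \<phi> \<phi>x \<phi>t \<phi>xx \<longleftrightarrow>
     (\<exists>\<phi>xt.
       (\<forall>p. (\<phi> has_derivative (\<lambda>(h,k). \<phi>x p * h + \<phi>t p * k)) (at p)) \<and>
       (\<forall>p. (\<phi>x has_derivative (\<lambda>(h,k). \<phi>xx p * h + \<phi>xt p * k)) (at p)) \<and>
       continuous_on UNIV \<phi>x \<and> continuous_on UNIV \<phi>t \<and>
       continuous_on UNIV \<phi>xx \<and> continuous_on UNIV \<phi>xt)"

text \<open>Solutions are taken in the standard uniqueness class: continuous on R x [0,infinity)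
  and uniformly continuous on R x [0,T] for every T > 0.\<close>

definition visc_solution ::
  "real \<Rightarrow> (real \<Rightarrow> real) \<Rightarrow> (real \<Rightarrow> real) \<Rightarrow> (real \<times> real \<Rightarrow> real) \<Rightarrow> bool" where
  "visc_solution \<epsilon> F g u \<longleftrightarrow>
     continuous_on (UNIV \<times> {0..}) u \<and>
     (\<forall>T>0. uniformly_continuous_on (UNIV \<times> {0..T}) u) \<and>
     (\<forall>x. u (x, 0) = g x) \<and>
     (\<forall>\<phi> \<phi>x \<phi>t \<phi>xx x0 t0. test_fun \<phi> \<phi>x \<phi>t \<phi>xx \<and> t0 > 0 \<longrightarrow>
        ((\<exists>r>0. \<forall>x t. t > 0 \<and> dist (x, t) (x0, t0) < r \<longrightarrow>
              u (x, t) - \<phi> (x, t) \<le> u (x0, t0) - \<phi> (x0, t0))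
          \<longrightarrow> \<phi>t (x0, t0) + F (\<phi>x (x0, t0)) - \<epsilon> * \<phi>xx (x0, t0) \<le> 0) \<and>
        ((\<exists>r>0. \<forall>x t. t > 0 \<and> dist (x, t) (x0, t0) < r \<longrightarrow>
              u (x, t) - \<phi> (x, t) \<ge> u (x0, t0) - \<phi> (x0, t0))
          \<longrightarrow> \<phi>t (x0, t0) + F (\<phi>x (x0, t0)) - \<epsilon> * \<phi>xx (x0, t0) \<ge> 0))"

definition locally_lipschitz :: "(real \<Rightarrow> real) \<Rightarrow> bool" where
  "locally_lipschitz F \<longleftrightarrow> (\<forall>R. \<exists>L. L-lipschitz_on {-R..R} F)"

end

theory Submission
  imports Defs
begin


definition D2 :: "(real \<times> real \<Rightarrow> real) \<Rightarrow> real \<Rightarrow> real \<Rightarrow> real \<times> real \<Rightarrow> bool" where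
  "D2 f a b p \<longleftrightarrow> (f has_derivative (\<lambda>(h,k). a * h + b * k)) (at p)"

lemma D2_I:
  assumes "(f has_derivative L) (at p)" "\<And>h k. L (h,k) = a * h + b * k"
  shows "D2 f a b p"
proof -
  have "L = (\<lambda>(h,k). a * h + b * k)"
  proof
    fix v :: "real \<times> real" show "L v = (\<lambda>(h,k). a * h + b * k) v"
      using assms(2)[of "fst v" "snd v"] by (cases v) simp
  qed
  thus ?thesis using assms(1) unfolding D2_def by simp
qed

lemma D2_fst: "D2 fst 1 0 p"
  by (rule D2_I[OF has_derivative_fst[OF has_derivative_ident]]) simp

lemma D2_snd: "D2 snd 0 1 p"
  by (rule D2_I[OF has_derivative_snd[OF has_derivative_ident]]) simp

lemma D2_const: "D2 (\<lambda>q. c) 0 0 p"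
  by (rule D2_I[OF has_derivative_const]) simp

lemma D2_add: "D2 f a b p \<Longrightarrow> D2 g c d p \<Longrightarrow> D2 (\<lambda>q. f q + g q) (a + c) (b + d) p"
  unfolding D2_def
  by (rule D2_I[unfolded D2_def, OF has_derivative_add]) (auto simp: algebra_simps)

lemma D2_diff: "D2 f a b p \<Longrightarrow> D2 g c d p \<Longrightarrow> D2 (\<lambda>q. f q - g q) (a - c) (b - d) p"
  unfolding D2_def
  by (rule D2_I[unfolded D2_def, OF has_derivative_diff]) (auto simp: algebra_simps)

lemma D2_mult: "D2 f a b p \<Longrightarrow> D2 g c d p \<Longrightarrow>
    D2 (\<lambda>q. f q * g q) (f p * c + a * g p) (f p * d + b * g p) p"
  unfolding D2_def
  by (rule D2_I[unfolded D2_def, OF has_derivative_mult]) (auto simp: algebra_simps)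

lemma D2_cmult: "D2 f a b p \<Longrightarrow> D2 (\<lambda>q. c * f q) (c * a) (c * b) p"
  using D2_mult[OF D2_const[of c p], of f a b] by simp

lemma D2_comp:
  assumes "(\<phi> has_real_derivative D) (at (f p))" "D2 f a b p"
  shows "D2 (\<lambda>q. \<phi> (f q)) (D * a) (D * b) p"
proof -
  have "(\<phi> has_derivative (*) D) (at (f p))"
    using assms(1) unfolding has_field_derivative_def .
  from has_derivative_compose[OF assms(2)[unfolded D2_def] this]
  show ?thesis by (rule D2_I) (simp add: algebra_simps)
qed

lemma D2_div:
  assumes "D2 f a b p" "D2 g c d p" "g p \<noteq> 0"
  shows "D2 (\<lambda>q. f q / g q) ((a * g p - f p * c) / (g p * g p)) ((b * g p - f p * d) / (g p * g p)) p"
  using has_derivative_divide[OF assms(1)[unfolded D2_def] assms(2)[unfolded D2_def] assms(3)]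
  by (rule D2_I) (use assms(3) in \<open>simp add: field_simps\<close>)

lemma D2_sqrt:
  assumes "D2 f a b p" "f p > 0"
  shows "D2 (\<lambda>q. sqrt (f q)) (a / (2 * sqrt (f p))) (b / (2 * sqrt (f p))) p"
proof -
  have X: "D2 (\<lambda>q. sqrt (f q)) (inverse (sqrt (f p)) / 2 * a) (inverse (sqrt (f p)) / 2 * b) p"
    by (rule D2_comp[OF DERIV_real_sqrt[OF assms(2)] assms(1)])
  have eqs: "inverse (sqrt (f p)) / 2 * a = a / (2 * sqrt (f p))" "inverse (sqrt (f p)) / 2 * b = b / (2 * sqrt (f p))"
    by (simp_all add: field_simps)
  show ?thesis using X unfolding eqs .
qed

lemma D2_exp:
  assumes "D2 f a b p"
  shows "D2 (\<lambda>q. exp (f q)) (exp (f p) * a) (exp (f p) * b) p"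
  by (rule D2_comp[OF DERIV_exp assms])




lemma D2_eq: "D2 f a b p \<Longrightarrow> a = a' \<Longrightarrow> b = b' \<Longrightarrow> D2 f a' b' p" by simp

lemma test_funI:
  assumes "\<And>p. D2 \<phi> (\<phi>x p) (\<phi>t p) p" "\<And>p. D2 \<phi>x (\<phi>xx p) (\<phi>xt p) p"
    "continuous_on UNIV \<phi>x" "continuous_on UNIV \<phi>t" "continuous_on UNIV \<phi>xx" "continuous_on UNIV \<phi>xt"
  shows "test_fun \<phi> \<phi>x \<phi>t \<phi>xx"
  unfolding test_fun_def using assms unfolding D2_def by blast

lemma test_funD:
  assumes "test_fun \<phi> \<phi>x \<phi>t \<phi>xx"
  obtains \<phi>xt where "\<And>p. D2 \<phi> (\<phi>x p) (\<phi>t p) p" "\<And>p. D2 \<phi>x (\<phi>xx p) (\<phi>xt p) p"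
    "continuous_on UNIV \<phi>x" "continuous_on UNIV \<phi>t" "continuous_on UNIV \<phi>xx" "continuous_on UNIV \<phi>xt"
  using assms unfolding test_fun_def D2_def by blast

definition pS :: "real \<Rightarrow> real" where "pS x = sqrt (1 + x * x)"

lemma pS_pos: "pS x > 0"
proof -
  have "0 \<le> x * x" by (rule zero_le_square)
  hence "0 < 1 + x * x" by linarith
  thus ?thesis unfolding pS_def by simp
qed

lemma pos1: "0 < 1 + x * (x::real)"
proof -
  have "0 \<le> x * x" by (rule zero_le_square)
  thus ?thesis by linarith
qed

lemma alg_p1: "S \<noteq> 0 \<Longrightarrow> \<kappa> * ((0 + (x * 1 + 1 * x)) / (2 * S)) + \<mu> * (e * (M * (0 - 0))) = \<kappa> * (x / (S::real))"
  by (simp add: field_simps)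
lemma alg_p2: "\<kappa> * ((0 + (x * 0 + 0 * x)) / (2 * S)) + \<mu> * (e * (M * (1 - 0))) = \<mu> * (M * (e::real))"
  by simp
lemma alg_p3: assumes "S > 0" "S * S = 1 + x * x"
  shows "\<kappa> * ((1 * S - x * ((0 + (x * 1 + 1 * x)) / (2 * S))) / (S * S)) = \<kappa> * (1 / (S * S * (S::real)))"
proof -
  have "1 * S - x * ((0 + (x * 1 + 1 * x)) / (2 * S)) = (S * S - x * x) / S" using assms(1) by (simp add: field_simps)
  also have "\<dots> = 1 / S" using assms(2) by simp
  finally show ?thesis by simp
qed
lemma alg_p4: "\<kappa> * ((0 * S - x * ((0 + (x * 0 + 0 * x)) / (2 * S))) / (S * S)) = (0::real)"
  by simp
lemma sqrt_pos1: "sqrt (1 + x * x) > 0" "sqrt (1 + x * x) \<noteq> 0" "sqrt (1 + x * x) * sqrt (1 + x * x) = 1 + x * (x::real)"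
  using pos1[of x] by simp_all

lemma pen_D1:
  "D2 (\<lambda>q. \<kappa> * pS (fst q) + \<mu> * exp (M * (snd q - t1)))
      (\<kappa> * (fst p / pS (fst p))) (\<mu> * (M * exp (M * (snd p - t1)))) p"
  unfolding pS_def
  apply (rule D2_eq)
    apply (rule D2_add D2_diff D2_cmult D2_mult D2_sqrt D2_div D2_exp D2_fst D2_snd D2_const pos1)+
   apply (rule alg_p1, rule sqrt_pos1)
  apply (rule alg_p2)
  done

lemma pen_D2:
  "D2 (\<lambda>q. \<kappa> * (fst q / pS (fst q)))
      (\<kappa> * (1 / (pS (fst p) * pS (fst p) * pS (fst p)))) 0 p"
  unfolding pS_def
  apply (rule D2_eq)
    apply (rule D2_add D2_diff D2_cmult D2_mult D2_sqrt D2_div D2_exp D2_fst D2_snd D2_const pos1)+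
    apply (rule sqrt_pos1)
   apply (rule alg_p3, rule sqrt_pos1, rule sqrt_pos1)
  apply (rule alg_p4)
  done



definition bY :: "real \<Rightarrow> real \<times> real \<Rightarrow> real" where
  "bY \<alpha> p = fst p - \<alpha> * snd p + \<alpha>"
definition bQ :: "real \<Rightarrow> real \<Rightarrow> real \<Rightarrow> real \<times> real \<Rightarrow> real" where
  "bQ \<alpha> c1 k p = bY \<alpha> p * bY \<alpha> p + c1 * exp (k * snd p)"
definition bR :: "real \<Rightarrow> real \<Rightarrow> real \<Rightarrow> real \<times> real \<Rightarrow> real" where
  "bR \<alpha> c1 k p = sqrt (bQ \<alpha> c1 k p)"

definition bar where
  "bar m B C \<delta> \<alpha> c1 k c2 k2 p = m * fst p + B * snd p + C + \<delta> * bR \<alpha> c1 k p + c2 * exp (k2 * snd p)"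
definition barx where
  "barx m \<delta> \<alpha> c1 k p = m + \<delta> * (bY \<alpha> p / bR \<alpha> c1 k p)"
definition bart where
  "bart B \<delta> \<alpha> c1 k c2 k2 p = B + \<delta> * ((c1 * k * exp (k * snd p) - 2 * \<alpha> * bY \<alpha> p) / (2 * bR \<alpha> c1 k p))
     + c2 * k2 * exp (k2 * snd p)"
definition barxx where
  "barxx \<delta> \<alpha> c1 k p = \<delta> * ((bR \<alpha> c1 k p - bY \<alpha> p * (bY \<alpha> p / bR \<alpha> c1 k p)) / (bR \<alpha> c1 k p * bR \<alpha> c1 k p))"
definition barxt where
  "barxt \<delta> \<alpha> c1 k p = \<delta> * ((- \<alpha> * bR \<alpha> c1 k p - bY \<alpha> p * ((c1 * k * exp (k * snd p) - 2 * \<alpha> * bY \<alpha> p) / (2 * bR \<alpha> c1 k p)))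
     / (bR \<alpha> c1 k p * bR \<alpha> c1 k p))"

lemma bQ_pos: "c1 > 0 \<Longrightarrow> bQ \<alpha> c1 k p > 0"
proof -
  assume c1: "c1 > 0"
  have "0 \<le> bY \<alpha> p * bY \<alpha> p" by (rule zero_le_square)
  moreover have "0 < c1 * exp (k * snd p)" using c1 by simp
  ultimately show ?thesis unfolding bQ_def by linarith
qed

lemma bR_pos: "c1 > 0 \<Longrightarrow> bR \<alpha> c1 k p > 0"
  unfolding bR_def using bQ_pos by simp

lemma bR_ne: "c1 > 0 \<Longrightarrow> bR \<alpha> c1 k p \<noteq> 0"
  using bR_pos[of c1 \<alpha> k p] by linarith

lemma bY_D: "D2 (bY \<alpha>) 1 (- \<alpha>) p"
  unfolding bY_def[abs_def]
  apply (rule D2_eq)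
    apply (rule D2_add D2_diff D2_cmult D2_mult D2_fst D2_snd D2_const)+
  apply simp_all
  done

lemma bQ_D: "D2 (bQ \<alpha> c1 k) (2 * bY \<alpha> p) (c1 * k * exp (k * snd p) - 2 * \<alpha> * bY \<alpha> p) p"
  unfolding bQ_def[abs_def]
  apply (rule D2_eq)
    apply (rule D2_add D2_diff D2_cmult D2_mult D2_exp bY_D D2_fst D2_snd D2_const)+
  apply (simp_all add: algebra_simps)
  done

lemma bR_D: assumes c1: "c1 > 0"
  shows "D2 (bR \<alpha> c1 k) (bY \<alpha> p / bR \<alpha> c1 k p) ((c1 * k * exp (k * snd p) - 2 * \<alpha> * bY \<alpha> p) / (2 * bR \<alpha> c1 k p)) p"
proof -
  have "D2 (\<lambda>q. sqrt (bQ \<alpha> c1 k q)) (2 * bY \<alpha> p / (2 * sqrt (bQ \<alpha> c1 k p)))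
     ((c1 * k * exp (k * snd p) - 2 * \<alpha> * bY \<alpha> p) / (2 * sqrt (bQ \<alpha> c1 k p))) p"
    by (rule D2_sqrt[OF bQ_D bQ_pos[OF c1]])
  moreover have "2 * bY \<alpha> p / (2 * sqrt (bQ \<alpha> c1 k p)) = bY \<alpha> p / sqrt (bQ \<alpha> c1 k p)" by simp
  ultimately show ?thesis unfolding bR_def[abs_def] by simp
qed

lemma bar_D1:
  assumes c1: "c1 > 0"
  shows "D2 (bar m B C \<delta> \<alpha> c1 k c2 k2) (barx m \<delta> \<alpha> c1 k p) (bart B \<delta> \<alpha> c1 k c2 k2 p) p"
  unfolding bar_def[abs_def] barx_def bart_def
  apply (rule D2_eq)
    apply (rule D2_add D2_diff D2_cmult D2_mult D2_exp bR_D[OF c1] D2_fst D2_snd D2_const)+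
  apply (simp_all add: algebra_simps)
  done

lemma bar_D2:
  assumes c1: "c1 > 0"
  shows "D2 (barx m \<delta> \<alpha> c1 k) (barxx \<delta> \<alpha> c1 k p) (barxt \<delta> \<alpha> c1 k p) p"
  unfolding barx_def[abs_def] barxx_def barxt_def
  apply (rule D2_eq)
    apply (rule D2_add D2_cmult D2_div bY_D bR_D[OF c1] bR_ne[OF c1] D2_const)+
  apply simp_all
  done




lemma cont_bY: "continuous_on UNIV (bY \<alpha>)"
  unfolding bY_def[abs_def] by (intro continuous_intros)

lemma cont_bR: "continuous_on UNIV (bR \<alpha> c1 k)"
  unfolding bR_def[abs_def] bQ_def[abs_def] bY_def by (intro continuous_intros)

lemma bR_ne2: "c1 > 0 \<Longrightarrow> 2 * bR \<alpha> c1 k p \<noteq> 0" "c1 > 0 \<Longrightarrow> bR \<alpha> c1 k p * bR \<alpha> c1 k p \<noteq> 0"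
  using bR_pos[of c1 \<alpha> k p] by simp_all

lemma test_fun_bar:
  assumes c1: "c1 > 0"
  shows "test_fun (bar m B C \<delta> \<alpha> c1 k c2 k2) (barx m \<delta> \<alpha> c1 k) (bart B \<delta> \<alpha> c1 k c2 k2) (barxx \<delta> \<alpha> c1 k)"
proof (rule test_funI[where \<phi>xt = "barxt \<delta> \<alpha> c1 k"])
  show "\<And>p. D2 (bar m B C \<delta> \<alpha> c1 k c2 k2) (barx m \<delta> \<alpha> c1 k p) (bart B \<delta> \<alpha> c1 k c2 k2 p) p"
    by (rule bar_D1[OF c1])
  show "\<And>p. D2 (barx m \<delta> \<alpha> c1 k) (barxx \<delta> \<alpha> c1 k p) (barxt \<delta> \<alpha> c1 k p) p"
    by (rule bar_D2[OF c1])
  show "continuous_on UNIV (barx m \<delta> \<alpha> c1 k)" unfolding barx_def[abs_def]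
    by (intro continuous_intros cont_bY cont_bR ballI bR_ne[OF c1])
  show "continuous_on UNIV (bart B \<delta> \<alpha> c1 k c2 k2)" unfolding bart_def[abs_def]
    by (intro continuous_intros cont_bY cont_bR ballI bR_ne[OF c1] bR_ne2[OF c1])
  show "continuous_on UNIV (barxx \<delta> \<alpha> c1 k)" unfolding barxx_def[abs_def]
    by (intro continuous_intros cont_bY cont_bR ballI bR_ne[OF c1] bR_ne2[OF c1])
  show "continuous_on UNIV (barxt \<delta> \<alpha> c1 k)" unfolding barxt_def[abs_def]
    by (intro continuous_intros cont_bY cont_bR ballI bR_ne[OF c1] bR_ne2[OF c1]
        bR_ne2[OF c1])
qed




lemma test_fun_neg:
  assumes "test_fun \<phi> \<phi>x \<phi>t \<phi>xx"
  shows "test_fun (\<lambda>p. - \<phi> p) (\<lambda>p. - \<phi>x p) (\<lambda>p. - \<phi>t p) (\<lambda>p. - \<phi>xx p)"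
proof -
  obtain \<phi>xt where h: "\<And>p. D2 \<phi> (\<phi>x p) (\<phi>t p) p" "\<And>p. D2 \<phi>x (\<phi>xx p) (\<phi>xt p) p"
    "continuous_on UNIV \<phi>x" "continuous_on UNIV \<phi>t" "continuous_on UNIV \<phi>xx" "continuous_on UNIV \<phi>xt"
    using test_funD[OF assms] by blast
  have n: "D2 (\<lambda>q. - f q) (- a) (- b) p" if "D2 f a b p" for f a b p
  proof -
    have "D2 (\<lambda>q. 0 - f q) (0 - a) (0 - b) p" by (rule D2_diff[OF D2_const that])
    thus ?thesis by simp
  qed
  show ?thesis
  proof (rule test_funI[where \<phi>xt = "\<lambda>p. - \<phi>xt p"])
    show "\<And>p. D2 (\<lambda>p. - \<phi> p) (- \<phi>x p) (- \<phi>t p) p" by (rule n[OF h(1)])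
    show "\<And>p. D2 (\<lambda>p. - \<phi>x p) (- \<phi>xx p) (- \<phi>xt p) p" by (rule n[OF h(2)])
  qed (intro continuous_intros h(3-6))+
qed

lemma cont_pS: "continuous_on UNIV (\<lambda>p::real\<times>real. pS (fst p))"
  unfolding pS_def by (intro continuous_intros)

lemma pS_ne: "pS x \<noteq> 0" "pS x * pS x * pS x \<noteq> 0"
  using pS_pos[of x] by simp_all

lemma test_fun_pen:
  assumes "test_fun \<phi> \<phi>x \<phi>t \<phi>xx"
  shows "test_fun (\<lambda>p. \<phi> p + (\<kappa> * pS (fst p) + \<mu> * exp (M * (snd p - t1))))
     (\<lambda>p. \<phi>x p + \<kappa> * (fst p / pS (fst p)))
     (\<lambda>p. \<phi>t p + \<mu> * (M * exp (M * (snd p - t1))))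
     (\<lambda>p. \<phi>xx p + \<kappa> * (1 / (pS (fst p) * pS (fst p) * pS (fst p))))"
proof -
  obtain \<phi>xt where h: "\<And>p. D2 \<phi> (\<phi>x p) (\<phi>t p) p" "\<And>p. D2 \<phi>x (\<phi>xx p) (\<phi>xt p) p"
    "continuous_on UNIV \<phi>x" "continuous_on UNIV \<phi>t" "continuous_on UNIV \<phi>xx" "continuous_on UNIV \<phi>xt"
    using test_funD[OF assms] by blast
  show ?thesis
  proof (rule test_funI[where \<phi>xt = "\<lambda>p. \<phi>xt p + 0"])
    show "\<And>p. D2 (\<lambda>p. \<phi> p + (\<kappa> * pS (fst p) + \<mu> * exp (M * (snd p - t1))))
       (\<phi>x p + \<kappa> * (fst p / pS (fst p))) (\<phi>t p + \<mu> * (M * exp (M * (snd p - t1)))) p"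
      by (rule D2_add[OF h(1) pen_D1])
    show "\<And>p. D2 (\<lambda>p. \<phi>x p + \<kappa> * (fst p / pS (fst p)))
       (\<phi>xx p + \<kappa> * (1 / (pS (fst p) * pS (fst p) * pS (fst p)))) (\<phi>xt p + 0) p"
      by (rule D2_add[OF h(2) pen_D2])
  qed (intro continuous_intros h(3-6) cont_pS ballI pS_ne)+
qed

lemma pen_bounds:
  fixes x \<kappa> :: real assumes k: "\<kappa> \<ge> 0"
  shows "\<bar>\<kappa> * (x / pS x)\<bar> \<le> \<kappa>" "\<bar>\<kappa> * (1 / (pS x * pS x * pS x))\<bar> \<le> \<kappa>"
proof -
  define S where "S = pS x"
  have Sp: "S > 0" unfolding S_def by (rule pS_pos)
  have SS: "S * S = 1 + x * x" unfolding S_def pS_def using pos1[of x] by simp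
  have S1: "S \<ge> 1"
  proof (rule ccontr)
    assume "\<not> S \<ge> 1"
    hence "S * S < 1 * 1" using Sp by (intro mult_strict_mono) auto
    moreover have "0 \<le> x * x" by (rule zero_le_square)
    ultimately show False using SS by linarith
  qed
  have Sx: "\<bar>x\<bar> \<le> S"
  proof (rule ccontr)
    assume "\<not> \<bar>x\<bar> \<le> S"
    hence "S * S < \<bar>x\<bar> * \<bar>x\<bar>" using Sp by (intro mult_strict_mono) auto
    moreover have "\<bar>x\<bar> * \<bar>x\<bar> = x * x" by (rule abs_mult_self_eq)
    ultimately show False using SS by linarith
  qed
  have "\<bar>x / S\<bar> = \<bar>x\<bar> / S" by (rule abs_div_pos[OF Sp, symmetric])
  also have "\<dots> \<le> 1" by (rule divide_le_eq_1_pos[OF Sp, THEN iffD2, OF Sx])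
  finally have q1: "\<bar>x / S\<bar> \<le> 1" .
  have "\<bar>\<kappa> * (x / S)\<bar> = \<kappa> * \<bar>x / S\<bar>" using k by (simp add: abs_mult)
  also have "\<dots> \<le> \<kappa>" using q1 k by (rule mult_left_le)
  finally show "\<bar>\<kappa> * (x / pS x)\<bar> \<le> \<kappa>" unfolding S_def .
  have S2: "1 \<le> S * S" using mult_mono[OF S1 S1] Sp by simp
  have S3: "1 \<le> S * S * S" using mult_mono[OF S2 S1] Sp by simp
  have q2: "\<bar>1 / (S * S * S)\<bar> \<le> 1" using S3 by simp
  have "\<bar>\<kappa> * (1 / (S * S * S))\<bar> = \<kappa> * \<bar>1 / (S * S * S)\<bar>" using k by (simp add: abs_mult)
  also have "\<dots> \<le> \<kappa>" using q2 k by (rule mult_left_le)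
  finally show "\<bar>\<kappa> * (1 / (pS x * pS x * pS x))\<bar> \<le> \<kappa>" unfolding S_def .
qed



lemma pS_ge_abs: "\<bar>x\<bar> \<le> pS x"
proof (rule ccontr)
  assume "\<not> \<bar>x\<bar> \<le> pS x"
  hence "pS x * pS x < \<bar>x\<bar> * \<bar>x\<bar>" using pS_pos[of x] by (intro mult_strict_mono) auto
  moreover have "\<bar>x\<bar> * \<bar>x\<bar> = x * x" by (rule abs_mult_self_eq)
  moreover have "pS x * pS x = 1 + x * x" unfolding pS_def using pos1[of x] by simp
  ultimately show False by linarith
qed

lemma pS_ge1: "1 \<le> pS x"
proof (rule ccontr)
  assume "\<not> 1 \<le> pS x"
  hence "pS x * pS x < 1 * 1" using pS_pos[of x] by (intro mult_strict_mono) auto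
  moreover have "0 \<le> x * x" by (rule zero_le_square)
  moreover have "pS x * pS x = 1 + x * x" unfolding pS_def using pos1[of x] by simp
  ultimately show False by linarith
qed

lemma comparison:
  fixes u w wx wt wxx :: "real \<times> real \<Rightarrow> real" and P :: "real \<Rightarrow> real \<Rightarrow> real \<Rightarrow> bool"
    and T t1 x1 B \<rho> :: real
  assumes cont: "continuous_on (UNIV \<times> {0..}) u"
    and sub: "\<And>\<phi> \<phi>x \<phi>t \<phi>xx x0 t0. test_fun \<phi> \<phi>x \<phi>t \<phi>xx \<Longrightarrow> t0 > 0 \<Longrightarrow>
        (\<exists>r>0. \<forall>x t. t > 0 \<and> dist (x,t) (x0,t0) < r \<longrightarrow> u (x,t) - \<phi> (x,t) \<le> u (x0,t0) - \<phi> (x0,t0)) \<Longrightarrow>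
        P (\<phi>t (x0,t0)) (\<phi>x (x0,t0)) (\<phi>xx (x0,t0))"
    and tw: "test_fun w wx wt wxx"
    and rho: "\<rho> > 0"
    and strict: "\<And>x t d e s. 0 < t \<Longrightarrow> t < T \<Longrightarrow> \<bar>d\<bar> \<le> \<rho> \<Longrightarrow> \<bar>e\<bar> \<le> \<rho> \<Longrightarrow> s \<ge> 0 \<Longrightarrow>
        \<not> P (wt (x,t) + s) (wx (x,t) + d) (wxx (x,t) + e)"
    and init: "\<And>x. u (x,0) \<le> w (x,0)"
    and bnd: "\<And>x t. 0 \<le> t \<Longrightarrow> t < T \<Longrightarrow> u (x,t) - w (x,t) \<le> B"
    and t1: "0 < t1" "t1 < T"
  shows "u (x1,t1) \<le> w (x1,t1)"
proof (rule ccontr)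
  assume "\<not> u (x1,t1) \<le> w (x1,t1)"
  define \<theta> where "\<theta> = u (x1,t1) - w (x1,t1)"
  have th: "\<theta> > 0" using \<open>\<not> _\<close> unfolding \<theta>_def by simp
  define S1 where "S1 = pS x1"
  have S1: "S1 \<ge> 1" unfolding S1_def by (rule pS_ge1)
  define \<kappa> where "\<kappa> = min \<rho> (\<theta> / (4 * S1))"
  have ka: "\<kappa> > 0" "\<kappa> \<le> \<rho>" "\<kappa> * S1 \<le> \<theta> / 4"
    using rho th S1 by (auto simp: \<kappa>_def min_def field_simps)
  define \<mu> where "\<mu> = \<theta> / 4"
  have mu: "\<mu> > 0" using th by (simp add: \<mu>_def)
  define \<tau> where "\<tau> = (T - t1) / 2"
  have tau: "\<tau> > 0" "t1 + \<tau> < T" "t1 + 2 * \<tau> = T" using t1 unfolding \<tau>_def by (auto simp: field_simps)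
  define Bp where "Bp = \<bar>B\<bar> + 1"
  have Bp: "Bp > B" "Bp > 0" by (auto simp: Bp_def)
  define M where "M = (\<bar>ln (Bp / \<mu>)\<bar> + 1) / \<tau>"
  have M: "M > 0" using tau by (simp add: M_def add_nonneg_pos)
  have "exp (M * \<tau>) = exp (\<bar>ln (Bp / \<mu>)\<bar> + 1)" using tau by (simp add: M_def)
  also have "\<dots> > exp (ln (Bp / \<mu>))" by simp
  also have "exp (ln (Bp / \<mu>)) = Bp / \<mu>" using Bp mu by simp
  finally have eM: "\<mu> * exp (M * \<tau>) > Bp" using mu by (simp add: field_simps)
  define X where "X = max \<bar>x1\<bar> (Bp / \<kappa>)"
  define pen where "pen = (\<lambda>p::real\<times>real. \<kappa> * pS (fst p) + \<mu> * exp (M * (snd p - t1)))"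
  define \<Phi> where "\<Phi> = (\<lambda>p. u p - (w p + pen p))"
  define K where "K = {-X..X} \<times> {0..t1 + \<tau>}"
  have pen_pos: "pen p > 0" for p
  proof -
    have "0 \<le> \<kappa> * pS (fst p)" using ka pS_pos[of "fst p"] by simp
    moreover have "0 < \<mu> * exp (M * (snd p - t1))" using mu by simp
    ultimately show ?thesis unfolding pen_def by linarith
  qed
  have out: "\<Phi> (x,t) < 0" if "0 \<le> t" "t < T" "(x,t) \<notin> K" for x t
  proof -
    have b: "u (x,t) - w (x,t) \<le> B" using bnd that by simp
    have nK: "\<not> (- X \<le> x \<and> x \<le> X \<and> t \<le> t1 + \<tau>)" using that(1,3) unfolding K_def by auto
    have "\<bar>x\<bar> > X \<or> t > t1 + \<tau>" using nK by (auto simp: abs_le_iff)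
    then show ?thesis
    proof (elim disjE)
      assume 1: "\<bar>x\<bar> > X"
      have "Bp \<le> \<kappa> * X" using ka unfolding X_def by (simp add: field_simps max_def)
      also have "\<kappa> * X < \<kappa> * \<bar>x\<bar>" using 1 ka by simp
      also have "\<kappa> * \<bar>x\<bar> \<le> \<kappa> * pS x" using ka pS_ge_abs[of x] by (intro mult_left_mono) auto
      finally have "Bp < \<kappa> * pS x" .
      moreover have "\<mu> * exp (M * (t - t1)) > 0" using mu by simp
      ultimately show ?thesis using b Bp unfolding \<Phi>_def pen_def fst_conv snd_conv by linarith
    next
      assume 2: "t > t1 + \<tau>"
      have "exp (M * \<tau>) \<le> exp (M * (t - t1))" using 2 M by simp
      hence "\<mu> * exp (M * \<tau>) \<le> \<mu> * exp (M * (t - t1))" using mu by simp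
      hence "Bp < \<mu> * exp (M * (t - t1))" using eM by simp
      moreover have "\<kappa> * pS x \<ge> 0" using ka pS_pos[of x] by simp
      ultimately show ?thesis using b Bp unfolding \<Phi>_def pen_def fst_conv snd_conv by linarith
    qed
  qed
  have cw: "continuous_on UNIV w"
  proof -
    obtain wxt where "\<And>p. D2 w (wx p) (wt p) p"
      using test_funD[OF tw] by blast
    hence "\<forall>p. (w has_derivative (\<lambda>(h,k). wx p * h + wt p * k)) (at p)" unfolding D2_def by blast
    then show ?thesis
      by (metis continuous_at_imp_continuous_on has_derivative_continuous)
  qed
  have KU: "K \<subseteq> UNIV \<times> {0..}" unfolding K_def by auto
  have cpen: "continuous_on UNIV pen" unfolding pen_def by (intro continuous_intros cont_pS)
  have cPhi: "continuous_on K \<Phi>" unfolding \<Phi>_def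
    by (intro continuous_intros continuous_on_subset[OF cont KU] continuous_on_subset[OF cw] continuous_on_subset[OF cpen] subset_UNIV)
  have x1K: "(x1, t1) \<in> K" using t1 tau unfolding K_def X_def by auto
  have cK: "compact K" unfolding K_def by (intro compact_Times compact_Icc)
  obtain p0 where p0: "p0 \<in> K" "\<And>q. q \<in> K \<Longrightarrow> \<Phi> q \<le> \<Phi> p0"
    using continuous_attains_sup[OF cK _ cPhi] x1K by blast
  obtain x0 t0 where p0e: "p0 = (x0, t0)" by (cases p0)
  have "\<Phi> (x1,t1) = \<theta> - \<kappa> * S1 - \<mu>" unfolding \<Phi>_def pen_def \<theta>_def S1_def by simp
  hence Phi1: "\<Phi> (x1,t1) > 0" using ka th unfolding \<mu>_def by simp
  have Phi0: "\<Phi> (x0,t0) > 0" using p0(2)[OF x1K] Phi1 p0e by simp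
  have t0: "0 \<le> t0" "t0 \<le> t1 + \<tau>" using p0(1) p0e unfolding K_def by auto
  have t0pos: "t0 > 0"
  proof (rule ccontr)
    assume "\<not> t0 > 0"
    hence "t0 = 0" using t0 by simp
    hence "\<Phi> (x0,t0) < 0" using init[of x0] pen_pos[of "(x0,0)"] unfolding \<Phi>_def by simp
    thus False using Phi0 by simp
  qed
  have locmax: "\<exists>r>0. \<forall>x t. t > 0 \<and> dist (x,t) (x0,t0) < r \<longrightarrow>
       u (x,t) - (w (x,t) + pen (x,t)) \<le> u (x0,t0) - (w (x0,t0) + pen (x0,t0))"
  proof (intro exI[of _ \<tau>] conjI allI impI)
    fix x t assume a: "t > 0 \<and> dist (x,t) (x0,t0) < \<tau>"
    have "dist t t0 < \<tau>" using a dist_snd_le[of "(x,t)" "(x0,t0)"] by simp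
    hence "t < T" using t0 tau by (simp add: dist_real_def abs_less_iff)
    show "u (x,t) - (w (x,t) + pen (x,t)) \<le> u (x0,t0) - (w (x0,t0) + pen (x0,t0))"
    proof (cases "(x,t) \<in> K")
      case True then show ?thesis using p0(2)[of "(x,t)"] p0e unfolding \<Phi>_def by simp
    next
      case False then show ?thesis using out[of t x] a \<open>t < T\<close> Phi0 unfolding \<Phi>_def by simp
    qed
  qed (rule tau(1))
  have tf: "test_fun (\<lambda>p. w p + pen p)
     (\<lambda>p. wx p + \<kappa> * (fst p / pS (fst p)))
     (\<lambda>p. wt p + \<mu> * (M * exp (M * (snd p - t1))))
     (\<lambda>p. wxx p + \<kappa> * (1 / (pS (fst p) * pS (fst p) * pS (fst p))))"
    unfolding pen_def by (rule test_fun_pen[OF tw])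
  have P: "P (wt (x0,t0) + \<mu> * (M * exp (M * (t0 - t1))))
            (wx (x0,t0) + \<kappa> * (x0 / pS x0))
            (wxx (x0,t0) + \<kappa> * (1 / (pS x0 * pS x0 * pS x0)))"
    using sub[OF tf t0pos] locmax by simp
  have "\<not> P (wt (x0,t0) + \<mu> * (M * exp (M * (t0 - t1))))
            (wx (x0,t0) + \<kappa> * (x0 / pS x0))
            (wxx (x0,t0) + \<kappa> * (1 / (pS x0 * pS x0 * pS x0)))"
  proof (rule strict)
    show "0 < t0" by (rule t0pos)
    show "t0 < T" using t0 tau by simp
    show "\<bar>\<kappa> * (x0 / pS x0)\<bar> \<le> \<rho>" using pen_bounds(1)[of \<kappa> x0] ka by simp
    show "\<bar>\<kappa> * (1 / (pS x0 * pS x0 * pS x0))\<bar> \<le> \<rho>" using pen_bounds(2)[of \<kappa> x0] ka by simp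
    show "0 \<le> \<mu> * (M * exp (M * (t0 - t1)))" using mu M by simp
  qed
  with P show False by simp
qed


lemma uc_bound:
  fixes u :: "real \<times> real \<Rightarrow> real"
  assumes uc: "uniformly_continuous_on (UNIV \<times> {0..T}) u"
  shows "\<exists>C. \<forall>x t. 0 \<le> t \<and> t \<le> T \<longrightarrow> \<bar>u (x,t) - u (x,0)\<bar> \<le> C"
proof -
  obtain d where d: "d > 0" "\<And>p q. p \<in> UNIV \<times> {0..T} \<Longrightarrow> q \<in> UNIV \<times> {0..T} \<Longrightarrow> dist q p < d \<Longrightarrow> dist (u q) (u p) < 1"
    using uc unfolding uniformly_continuous_on_def by (metis zero_less_one)
  have claim: "\<forall>x t. 0 \<le> t \<and> t \<le> T \<and> t \<le> real n * d / 2 \<longrightarrow> \<bar>u (x,t) - u (x,0)\<bar> \<le> real n" for n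
  proof (induction n)
    case 0 then show ?case by auto
  next
    case (Suc n)
    show ?case
    proof (intro allI impI)
      fix x t assume a: "0 \<le> t \<and> t \<le> T \<and> t \<le> real (Suc n) * d / 2"
      define t' where "t' = max 0 (t - d/2)"
      have nn: "0 \<le> real n * d / 2" using d by simp
      have Sn: "real (Suc n) * d / 2 = real n * d / 2 + d / 2" by (simp add: field_simps)
      have t': "0 \<le> t'" "t' \<le> T" "t' \<le> real n * d / 2" "t' \<le> t" "t - t' \<le> d / 2"
      proof -
        have ge: "t - d / 2 \<le> t'" "0 \<le> t'" unfolding t'_def by simp_all
        have A: "t' = 0 \<or> t' = t - d / 2" unfolding t'_def by (simp add: max_def)
        have B: "t' \<le> t" using A a d by (elim disjE) linarith+
        have C: "t' \<le> real n * d / 2" using A a d Sn nn by (elim disjE) linarith+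
        show "0 \<le> t'" "t' \<le> T" "t' \<le> real n * d / 2" "t' \<le> t" "t - t' \<le> d / 2"
          using ge B C a by linarith+
      qed
      have IH: "\<bar>u (x,t') - u (x,0)\<bar> \<le> real n" using Suc.IH t' by blast
      have "dist (x,t) (x,t') < d" using t' d by (simp add: dist_Pair_Pair dist_real_def)
      hence "dist (u (x,t)) (u (x,t')) < 1" using d(2)[of "(x,t')" "(x,t)"] a t' by auto
      hence "\<bar>u (x,t) - u (x,t')\<bar> < 1" by (simp add: dist_real_def)
      with IH show "\<bar>u (x,t) - u (x,0)\<bar> \<le> real (Suc n)" by simp
    qed
  qed
  obtain n :: nat where n: "2 * T / d < real n" using reals_Archimedean2 by blast
  hence "T \<le> real n * d / 2" using d by (simp add: field_simps)
  hence "\<forall>x t. 0 \<le> t \<and> t \<le> T \<longrightarrow> \<bar>u (x,t) - u (x,0)\<bar> \<le> real n" using claim[of n] by auto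
  thus ?thesis by blast
qed

lemma sqrt_plus_le: "0 \<le> E \<Longrightarrow> sqrt (y\<^sup>2 + E) \<le> \<bar>y\<bar> + sqrt E"
  using sqrt_sum_squares_le_sum_abs[of y "sqrt E"] by simp

lemma sqrt_plus_le2: "0 \<le> E \<Longrightarrow> sqrt (y * y + E) \<le> \<bar>y\<bar> + sqrt E"
  using sqrt_plus_le[of E y] by (simp add: power2_eq_square)

lemma bar_bound:
  assumes c1: "c1 > 0" and \<delta>: "\<delta> \<ge> 0" and T: "T \<ge> 0"
  shows "\<exists>K. \<forall>x t. 0 \<le> t \<and> t \<le> T \<longrightarrow> \<bar>bar m B C \<delta> \<alpha> c1 k c2 k2 (x,t) - (m * x + \<delta> * \<bar>x + \<alpha>\<bar>)\<bar> \<le> K"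
proof (intro exI allI impI)
  fix x t assume t: "0 \<le> t \<and> t \<le> T"
  define Y where "Y = x - \<alpha> * t + \<alpha>"
  define E where "E = c1 * exp (k * t)"
  have E: "0 \<le> E" "E \<le> c1 * exp (\<bar>k\<bar> * T)" using c1 t unfolding E_def
    by (auto intro!: mult_left_mono simp: mult_mono abs_mult
       intro: order.trans[OF abs_ge_self] mult_right_mono)
  have R1: "\<bar>Y\<bar> \<le> sqrt (Y * Y + E)" using E by (intro real_le_rsqrt) (simp add: power2_eq_square)
  have R2: "sqrt (Y * Y + E) \<le> \<bar>Y\<bar> + sqrt (c1 * exp (\<bar>k\<bar> * T))"
    using sqrt_plus_le2[OF E(1), of Y] E(2) by (meson add_left_mono order.trans real_sqrt_le_iff)
  have Y: "\<bar>\<bar>Y\<bar> - \<bar>x + \<alpha>\<bar>\<bar> \<le> \<bar>\<alpha>\<bar> * T"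
  proof -
    have "\<bar>\<bar>Y\<bar> - \<bar>x + \<alpha>\<bar>\<bar> \<le> \<bar>Y - (x + \<alpha>)\<bar>" by (rule abs_triangle_ineq3)
    also have "\<dots> = \<bar>\<alpha>\<bar> * t" using t by (simp add: Y_def abs_mult)
    also have "\<dots> \<le> \<bar>\<alpha>\<bar> * T" using t by (simp add: mult_left_mono)
    finally show ?thesis .
  qed
  have Y2: "\<bar>Y\<bar> - \<bar>x + \<alpha>\<bar> \<le> \<bar>\<alpha>\<bar> * T" "\<bar>x + \<alpha>\<bar> - \<bar>Y\<bar> \<le> \<bar>\<alpha>\<bar> * T"
    using Y unfolding abs_le_iff by auto
  have sq0: "0 \<le> sqrt (c1 * exp (\<bar>k\<bar> * T))" using c1 by simp
  have D: "\<bar>sqrt (Y * Y + E) - \<bar>x + \<alpha>\<bar>\<bar> \<le> \<bar>\<alpha>\<bar> * T + sqrt (c1 * exp (\<bar>k\<bar> * T))"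
    unfolding abs_le_iff using R1 R2 Y2 sq0 by (intro conjI; linarith)
  have e2: "\<bar>exp (k2 * t)\<bar> \<le> exp (\<bar>k2\<bar> * T)"
    using t by (simp add: abs_mult) (meson abs_ge_self abs_ge_zero mult_mono order.trans)
  have "bar m B C \<delta> \<alpha> c1 k c2 k2 (x,t) - (m * x + \<delta> * \<bar>x + \<alpha>\<bar>)
      = B * t + C + \<delta> * (sqrt (Y * Y + E) - \<bar>x + \<alpha>\<bar>) + c2 * exp (k2 * t)"
    unfolding bar_def bR_def bQ_def bY_def Y_def E_def by (simp add: algebra_simps)
  also have "\<bar>\<dots>\<bar> \<le> \<bar>B\<bar> * T + \<bar>C\<bar> + \<delta> * (\<bar>\<alpha>\<bar> * T + sqrt (c1 * exp (\<bar>k\<bar> * T))) + \<bar>c2\<bar> * exp (\<bar>k2\<bar> * T)"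
  proof -
    have "\<bar>B * t\<bar> \<le> \<bar>B\<bar> * T" using t by (simp add: abs_mult mult_left_mono)
    moreover have "\<bar>\<delta> * (sqrt (Y * Y + E) - \<bar>x + \<alpha>\<bar>)\<bar> \<le> \<delta> * (\<bar>\<alpha>\<bar> * T + sqrt (c1 * exp (\<bar>k\<bar> * T)))"
      using D \<delta> by (simp add: abs_mult mult_left_mono)
    moreover have "\<bar>c2 * exp (k2 * t)\<bar> \<le> \<bar>c2\<bar> * exp (\<bar>k2\<bar> * T)"
      using e2 by (simp add: abs_mult mult_left_mono del: exp_le_cancel_iff)
    ultimately show ?thesis using abs_ge_self[of C] abs_ge_minus_self[of C] unfolding abs_le_iff
      by (elim conjE, intro conjI) linarith+
  qed
  finally show "\<bar>bar m B C \<delta> \<alpha> c1 k c2 k2 (x,t) - (m * x + \<delta> * \<bar>x + \<alpha>\<bar>)\<bar>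
     \<le> \<bar>B\<bar> * T + \<bar>C\<bar> + \<delta> * (\<bar>\<alpha>\<bar> * T + sqrt (c1 * exp (\<bar>k\<bar> * T))) + \<bar>c2\<bar> * exp (\<bar>k2\<bar> * T)" .
qed

lemma key_ineq:
  fixes \<epsilon> E Y R g :: real
  assumes "\<epsilon> > 0" "0 < E" "E \<le> 3" "g > 0" "g * g = \<epsilon> * E" "R > 0" "R * R = Y * Y + \<epsilon> * E"
  shows "\<epsilon> * E / (4 * R) - g / 12 - \<epsilon> * ((R - Y * (Y / R)) / (R * R)) \<le> 0"
proof -
  define G where "G = \<epsilon> * E"
  have G: "G = g * g" using assms unfolding G_def by simp
  have t3: "(R - Y * (Y / R)) / (R * R) = G / (R * R * R)"
    using assms unfolding G_def by (simp add: field_simps)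
  have eG: "\<epsilon> * G \<ge> G * G / 3"
    using assms unfolding G_def by (simp add: field_simps mult_left_mono)
  have poly: "3 * G * (R * R) - g * (R * R * R) - 4 * (G * G) \<le> 0"
  proof -
    have "3 * G * (R * R) - g * (R * R * R) - 4 * (G * G) = - g * ((R - 2 * g) * (R - 2 * g) * (R + g))"
      unfolding G by (simp add: algebra_simps)
    also have "\<dots> \<le> 0" using assms by (simp add: mult_nonneg_nonneg)
    finally show ?thesis .
  qed
  have L: "\<epsilon> * E / (4 * R) - g / 12 - \<epsilon> * ((R - Y * (Y / R)) / (R * R))
      = G / (4 * R) - g / 12 - \<epsilon> * G / (R * R * R)"
    unfolding t3 G_def by simp
  have "G / (4 * R) - g / 12 - \<epsilon> * G / (R * R * R)
      = (3 * G * (R * R) - g * (R * R * R) - 12 * (\<epsilon> * G)) / (12 * (R * R * R))"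
    using assms(6) by (simp add: field_simps)
  hence "\<epsilon> * E / (4 * R) - g / 12 - \<epsilon> * ((R - Y * (Y / R)) / (R * R))
      = (3 * G * (R * R) - g * (R * R * R) - 12 * (\<epsilon> * G)) / (12 * (R * R * R))" using L by simp
  also have "\<dots> \<le> 0"
  proof -
    have num: "3 * G * (R * R) - g * (R * R * R) - 12 * (\<epsilon> * G) \<le> 0" using poly eG by linarith
    have den: "0 < 12 * (R * R * R)" using assms(6) by simp
    show ?thesis by (rule divide_nonpos_pos[OF num den])
  qed
  finally show ?thesis .
qed
lemma visc_sub:
  assumes "visc_solution \<epsilon> F g u" "test_fun \<phi> \<phi>x \<phi>t \<phi>xx" "t0 > 0"
    "\<exists>r>0. \<forall>x t. t > 0 \<and> dist (x, t) (x0, t0) < r \<longrightarrow> u (x, t) - \<phi> (x, t) \<le> u (x0, t0) - \<phi> (x0, t0)"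
  shows "\<phi>t (x0, t0) + F (\<phi>x (x0, t0)) - \<epsilon> * \<phi>xx (x0, t0) \<le> 0"
proof -
  have "\<forall>\<phi> \<phi>x \<phi>t \<phi>xx x0 t0. test_fun \<phi> \<phi>x \<phi>t \<phi>xx \<and> t0 > 0 \<longrightarrow>
        ((\<exists>r>0. \<forall>x t. t > 0 \<and> dist (x, t) (x0, t0) < r \<longrightarrow>
              u (x, t) - \<phi> (x, t) \<le> u (x0, t0) - \<phi> (x0, t0))
          \<longrightarrow> \<phi>t (x0, t0) + F (\<phi>x (x0, t0)) - \<epsilon> * \<phi>xx (x0, t0) \<le> 0) \<and>
        ((\<exists>r>0. \<forall>x t. t > 0 \<and> dist (x, t) (x0, t0) < r \<longrightarrow>
              u (x, t) - \<phi> (x, t) \<ge> u (x0, t0) - \<phi> (x0, t0))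
          \<longrightarrow> \<phi>t (x0, t0) + F (\<phi>x (x0, t0)) - \<epsilon> * \<phi>xx (x0, t0) \<ge> 0)"
    using assms(1) unfolding visc_solution_def by (elim conjE)
  from this[rule_format, of \<phi> \<phi>x \<phi>t \<phi>xx t0 x0] assms(2-4) show ?thesis by auto
qed
lemma visc_super:
  assumes "visc_solution \<epsilon> F g u" "test_fun \<phi> \<phi>x \<phi>t \<phi>xx" "t0 > 0"
    "\<exists>r>0. \<forall>x t. t > 0 \<and> dist (x, t) (x0, t0) < r \<longrightarrow> u (x, t) - \<phi> (x, t) \<ge> u (x0, t0) - \<phi> (x0, t0)"
  shows "\<phi>t (x0, t0) + F (\<phi>x (x0, t0)) - \<epsilon> * \<phi>xx (x0, t0) \<ge> 0"
proof -
  have "\<forall>\<phi> \<phi>x \<phi>t \<phi>xx x0 t0. test_fun \<phi> \<phi>x \<phi>t \<phi>xx \<and> t0 > 0 \<longrightarrow>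
        ((\<exists>r>0. \<forall>x t. t > 0 \<and> dist (x, t) (x0, t0) < r \<longrightarrow>
              u (x, t) - \<phi> (x, t) \<le> u (x0, t0) - \<phi> (x0, t0))
          \<longrightarrow> \<phi>t (x0, t0) + F (\<phi>x (x0, t0)) - \<epsilon> * \<phi>xx (x0, t0) \<le> 0) \<and>
        ((\<exists>r>0. \<forall>x t. t > 0 \<and> dist (x, t) (x0, t0) < r \<longrightarrow>
              u (x, t) - \<phi> (x, t) \<ge> u (x0, t0) - \<phi> (x0, t0))
          \<longrightarrow> \<phi>t (x0, t0) + F (\<phi>x (x0, t0)) - \<epsilon> * \<phi>xx (x0, t0) \<ge> 0)"
    using assms(1) unfolding visc_solution_def by (elim conjE)
  from this[rule_format, of \<phi> \<phi>x \<phi>t \<phi>xx t0 x0] assms(2-4) show ?thesis by auto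
qed



lemma ratio_le1: assumes R: "(R::real) > 0" and YR: "\<bar>Y\<bar> \<le> R" shows "\<bar>Y / R\<bar> \<le> 1"
proof -
  have "\<bar>Y / R\<bar> = \<bar>Y\<bar> / R" by (rule abs_div_pos[OF R, symmetric])
  also have "\<dots> \<le> 1" by (rule divide_le_eq_1_pos[OF R, THEN iffD2, OF YR])
  finally show ?thesis .
qed

lemma slope_in:
  fixes a b q d :: real
  assumes "a < b" "\<bar>q\<bar> \<le> 1" "\<bar>d\<bar> \<le> (b - a) / 8"
  shows "(a + b) / 2 + (b - a) / 8 * q + d \<in> {a<..<b}"
proof -
  define c where "c = (b - a) / 8"
  have p: "0 < c" using assms(1) unfolding c_def by simp
  have "\<bar>c * q\<bar> = c * \<bar>q\<bar>" using p by (simp add: abs_mult)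
  also have "\<dots> \<le> c" using assms(2) p by (intro mult_left_le) auto
  finally have h: "\<bar>c * q\<bar> \<le> c" .
  have h1: "- c \<le> c * q" "c * q \<le> c" using h unfolding abs_le_iff by auto
  have h2: "- c \<le> d" "d \<le> c" using assms(3) unfolding abs_le_iff c_def[symmetric] by auto
  have s1: "- 2 * c \<le> c * q + d" "c * q + d \<le> 2 * c" using h1 h2 by linarith+
  have s2: "(a + b) / 2 - 2 * c = (3 * a + b) / 4" "(a + b) / 2 + 2 * c = (a + 3 * b) / 4" unfolding c_def by (simp_all add: field_simps)
  have s3: "a < (3 * a + b) / 4" "(a + 3 * b) / 4 < b" using assms(1) by (simp_all add: field_simps)
  have "a < (a + b) / 2 + c * q + d" using s1 s2 s3 by linarith
  moreover have "(a + b) / 2 + c * q + d < b" using s1 s2 s3 by linarith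
  ultimately have "(a + b) / 2 + c * q + d \<in> {a<..<b}" by simp
  thus ?thesis unfolding c_def .
qed

lemma bR_RR: "c1 > 0 \<Longrightarrow> bR \<alpha> c1 k p * bR \<alpha> c1 k p = bY \<alpha> p * bY \<alpha> p + c1 * exp (k * snd p)"
  unfolding bR_def using bQ_pos[of c1 \<alpha> k p] by (simp add: bQ_def)

lemma bR_ge: assumes "c1 > 0" shows "\<bar>bY \<alpha> p\<bar> \<le> bR \<alpha> c1 k p"
proof (rule ccontr)
  assume "\<not> ?thesis"
  hence "bR \<alpha> c1 k p * bR \<alpha> c1 k p < \<bar>bY \<alpha> p\<bar> * \<bar>bY \<alpha> p\<bar>"
    using bR_pos[OF assms, of \<alpha> k p] by (intro mult_strict_mono) auto
  moreover have "\<bar>bY \<alpha> p\<bar> * \<bar>bY \<alpha> p\<bar> = bY \<alpha> p * bY \<alpha> p" by (rule abs_mult_self_eq)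
  moreover have "0 < c1 * exp (k * snd p)" using assms by simp
  ultimately show False using bR_RR[OF assms, of \<alpha> k p] by linarith
qed

lemma upper_part:
  fixes F :: "real \<Rightarrow> real"
  assumes lin: "\<forall>p\<in>{a<..<b}. F p = \<alpha> * p + \<beta>"
    and m: "m = (a + b) / 2" and \<delta>: "\<delta> = (b - a) / 8" and ab: "a < b"
    and sol: "visc_solution 0 F (\<lambda>x. m * x + \<delta> * \<bar>x + \<alpha>\<bar>) u"
  shows "u (0,1) \<le> - m * \<alpha> - \<beta>"
proof (rule field_le_epsilon)
  fix e :: real assume e: "e > 0"
  have dpos: "\<delta> > 0" using ab \<delta> by simp
  define \<gamma> where "\<gamma> = e / 2"
  define \<eta> where "\<eta> = e / (2 * \<delta>)"
  have gp: "\<gamma> > 0" "\<eta> > 0" using e dpos by (auto simp: \<gamma>_def \<eta>_def)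
  define w where "w = bar m (\<gamma> - m * \<alpha> - \<beta>) 0 \<delta> \<alpha> (\<eta> * \<eta>) 0 0 0"
  define \<rho> where "\<rho> = min \<delta> (\<gamma> / (2 * (\<bar>\<alpha>\<bar> + 1)))"
  have rho: "\<rho> > 0" "\<rho> \<le> \<delta>" "\<bar>\<alpha>\<bar> * \<rho> < \<gamma>"
  proof -
    show "\<rho> > 0" "\<rho> \<le> \<delta>" using dpos gp by (auto simp: \<rho>_def)
    have "\<rho> \<le> \<gamma> / (2 * (\<bar>\<alpha>\<bar> + 1))" by (simp add: \<rho>_def)
    hence "(\<bar>\<alpha>\<bar> + 1) * \<rho> \<le> \<gamma> / 2" by (simp add: field_simps add_pos_nonneg)
    thus "\<bar>\<alpha>\<bar> * \<rho> < \<gamma>" using \<open>\<rho> > 0\<close> gp by (simp add: algebra_simps)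
  qed
  have cont: "continuous_on (UNIV \<times> {0..}) u" and uc: "uniformly_continuous_on (UNIV \<times> {0..2}) u"
    and init: "\<And>x. u (x,0) = m * x + \<delta> * \<bar>x + \<alpha>\<bar>"
    using sol unfolding visc_solution_def by auto
  have c1: "\<eta> * \<eta> > 0" using gp by simp
  obtain C1 where C1: "\<And>x t. 0 \<le> t \<and> t \<le> 2 \<Longrightarrow> \<bar>u (x,t) - u (x,0)\<bar> \<le> C1"
    using uc_bound[OF uc] by blast
  obtain C2 where C2: "\<And>x t. 0 \<le> t \<and> t \<le> 2 \<Longrightarrow> \<bar>w (x,t) - (m * x + \<delta> * \<bar>x + \<alpha>\<bar>)\<bar> \<le> C2"
    using bar_bound[OF c1, of \<delta> 2] dpos unfolding w_def by fastforce
  have "u (0,1) \<le> w (0,1)"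
  proof (rule comparison[where P = "\<lambda>pt px pxx. pt + F px - 0 * pxx \<le> 0" and T = 2 and \<rho> = \<rho>
        and B = "C1 + C2" and wx = "barx m \<delta> \<alpha> (\<eta> * \<eta>) 0" and wt = "bart (\<gamma> - m * \<alpha> - \<beta>) \<delta> \<alpha> (\<eta> * \<eta>) 0 0 0"
        and wxx = "barxx \<delta> \<alpha> (\<eta> * \<eta>) 0"])
    show "continuous_on (UNIV \<times> {0..}) u" by (rule cont)
    show "test_fun w (barx m \<delta> \<alpha> (\<eta> * \<eta>) 0) (bart (\<gamma> - m * \<alpha> - \<beta>) \<delta> \<alpha> (\<eta> * \<eta>) 0 0 0) (barxx \<delta> \<alpha> (\<eta> * \<eta>) 0)"
      unfolding w_def by (rule test_fun_bar[OF c1])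
    show "\<rho> > 0" by (rule rho)
    show "(0::real) < 1" "(1::real) < 2" by simp_all
    fix \<phi> \<phi>x \<phi>t \<phi>xx x0 and t0 :: real
    assume "test_fun \<phi> \<phi>x \<phi>t \<phi>xx" "t0 > 0"
      "\<exists>r>0. \<forall>x t. t > 0 \<and> dist (x,t) (x0,t0) < r \<longrightarrow> u (x,t) - \<phi> (x,t) \<le> u (x0,t0) - \<phi> (x0,t0)"
    then show "\<phi>t (x0,t0) + F (\<phi>x (x0,t0)) - 0 * \<phi>xx (x0,t0) \<le> 0"
      using visc_sub[OF sol] by blast
  next
    fix x t d e' s :: real
    assume a: "0 < t" "t < 2" "\<bar>d\<bar> \<le> \<rho>" "\<bar>e'\<bar> \<le> \<rho>" "s \<ge> 0"
    define Y where "Y = bY \<alpha> (x,t)"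
    define R where "R = bR \<alpha> (\<eta> * \<eta>) 0 (x,t)"
    have R: "R > 0" unfolding R_def by (rule bR_pos[OF c1])
    have YR: "\<bar>Y\<bar> \<le> R" unfolding R_def Y_def by (rule bR_ge[OF c1])
    have q: "\<bar>Y / R\<bar> \<le> 1" by (rule ratio_le1[OF R YR])
    have bx: "barx m \<delta> \<alpha> (\<eta> * \<eta>) 0 (x,t) = m + \<delta> * (Y / R)" unfolding barx_def Y_def R_def ..
    have bt: "bart (\<gamma> - m * \<alpha> - \<beta>) \<delta> \<alpha> (\<eta> * \<eta>) 0 0 0 (x,t) = \<gamma> - m * \<alpha> - \<beta> - \<alpha> * (\<delta> * (Y / R))"
      unfolding bart_def Y_def[symmetric] R_def[symmetric] using R by (simp add: field_simps)
    have dd: "\<bar>d\<bar> \<le> (b - a) / 8" using a(3) rho(2) \<delta> by linarith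
    have "m + \<delta> * (Y / R) + d \<in> {a<..<b}" unfolding m \<delta> by (rule slope_in[OF ab q dd])
    hence Fv: "F (m + \<delta> * (Y / R) + d) = \<alpha> * (m + \<delta> * (Y / R) + d) + \<beta>" using lin by blast
    have "\<bar>\<alpha> * d\<bar> = \<bar>\<alpha>\<bar> * \<bar>d\<bar>" by (rule abs_mult)
    also have "\<dots> \<le> \<bar>\<alpha>\<bar> * \<rho>" using a(3) by (intro mult_left_mono) auto
    finally have ad: "\<bar>\<alpha> * d\<bar> < \<gamma>" using rho(3) by linarith
    have eq: "bart (\<gamma> - m * \<alpha> - \<beta>) \<delta> \<alpha> (\<eta> * \<eta>) 0 0 0 (x,t) + s + F (barx m \<delta> \<alpha> (\<eta> * \<eta>) 0 (x,t) + d)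
          - 0 * (barxx \<delta> \<alpha> (\<eta> * \<eta>) 0 (x,t) + e') = \<gamma> + s + \<alpha> * d"
      unfolding bx bt Fv by (simp add: algebra_simps)
    show "\<not> (bart (\<gamma> - m * \<alpha> - \<beta>) \<delta> \<alpha> (\<eta> * \<eta>) 0 0 0 (x,t) + s + F (barx m \<delta> \<alpha> (\<eta> * \<eta>) 0 (x,t) + d)
          - 0 * (barxx \<delta> \<alpha> (\<eta> * \<eta>) 0 (x,t) + e') \<le> 0)"
      unfolding eq using ad a(5) abs_ge_minus_self[of "\<alpha> * d"] by linarith
  next
    fix x show "u (x,0) \<le> w (x,0)"
    proof -
      have "\<bar>bY \<alpha> (x,0)\<bar> \<le> bR \<alpha> (\<eta> * \<eta>) 0 (x,0)" by (rule bR_ge[OF c1])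
      hence "\<bar>x + \<alpha>\<bar> \<le> bR \<alpha> (\<eta> * \<eta>) 0 (x,0)" by (simp add: bY_def)
      hence "\<delta> * \<bar>x + \<alpha>\<bar> \<le> \<delta> * bR \<alpha> (\<eta> * \<eta>) 0 (x,0)" using dpos by (intro mult_left_mono) auto
      moreover have "w (x,0) = m * x + \<delta> * bR \<alpha> (\<eta> * \<eta>) 0 (x,0)" unfolding w_def bar_def by simp
      ultimately show ?thesis unfolding init by linarith
    qed
  next
    fix x t :: real assume "0 \<le> t" "t < 2"
    then show "u (x,t) - w (x,t) \<le> C1 + C2" using C1[of t x] C2[of t x] init[of x] by (simp add: abs_le_iff)
  qed
  also have "w (0,1) = \<gamma> - m * \<alpha> - \<beta> + \<delta> * \<eta>"
  proof -
    have "bR \<alpha> (\<eta> * \<eta>) 0 (0,1) = sqrt (\<eta> * \<eta>)" unfolding bR_def bQ_def bY_def by simp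
    also have "\<dots> = \<eta>" using gp by simp
    finally show ?thesis unfolding w_def bar_def by simp
  qed
  also have "\<dots> = - m * \<alpha> - \<beta> + e" using dpos unfolding \<gamma>_def \<eta>_def by (simp add: field_simps)
  finally show "u (0,1) \<le> - m * \<alpha> - \<beta> + e" .
qed



lemma lower_part:
  fixes F :: "real \<Rightarrow> real"
  assumes lin: "\<forall>p\<in>{a<..<b}. F p = \<alpha> * p + \<beta>"
    and m: "m = (a + b) / 2" and \<delta>: "\<delta> = (b - a) / 8" and ab: "a < b"
    and eps: "0 < \<epsilon>" "\<epsilon> < 1/4"
    and sol: "visc_solution \<epsilon> F (\<lambda>x. m * x + \<delta> * \<bar>x + \<alpha>\<bar>) u"
  shows "- m * \<alpha> - \<beta> + \<delta> * (2/3) * (exp (1/4) - 1) * sqrt \<epsilon> \<le> u (0,1)"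
proof -
  have dpos: "\<delta> > 0" using ab \<delta> by simp
  have main: "- m * \<alpha> - \<beta> + \<delta> * (2/3) * (exp (1/4) - 1) * sqrt \<epsilon> \<le> u (0,1) + \<gamma>" if gp: "\<gamma> > 0" for \<gamma>
  proof -
  define V where "V = bar m (- m * \<alpha> - \<beta> - \<gamma>) (- (2/3) * \<delta> * sqrt \<epsilon>) \<delta> \<alpha> \<epsilon> (1/2) (- (\<delta>/3) * sqrt \<epsilon>) (1/4)"
  define \<rho> where "\<rho> = min \<delta> (\<gamma> / (2 * (\<bar>\<alpha>\<bar> + 1)))"
  have rho: "\<rho> > 0" "\<rho> \<le> \<delta>" "(\<bar>\<alpha>\<bar> + 1) * \<rho> < \<gamma>"
  proof -
    show "\<rho> > 0" "\<rho> \<le> \<delta>" using dpos gp by (auto simp: \<rho>_def)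
    have a1: "0 < 2 * (\<bar>\<alpha>\<bar> + 1)" by (simp add: add_nonneg_pos)
    have "\<rho> \<le> \<gamma> / (2 * (\<bar>\<alpha>\<bar> + 1))" by (simp add: \<rho>_def)
    hence "\<rho> * (2 * (\<bar>\<alpha>\<bar> + 1)) \<le> \<gamma>" using a1 by (simp add: le_divide_eq)
    hence "(\<bar>\<alpha>\<bar> + 1) * \<rho> \<le> \<gamma> / 2" by (simp add: algebra_simps)
    thus "(\<bar>\<alpha>\<bar> + 1) * \<rho> < \<gamma>" using gp by linarith
  qed
  have cont: "continuous_on (UNIV \<times> {0..}) u" and uc: "uniformly_continuous_on (UNIV \<times> {0..2}) u"
    and init: "\<And>x. u (x,0) = m * x + \<delta> * \<bar>x + \<alpha>\<bar>"
    using sol unfolding visc_solution_def by auto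
  have c1: "\<epsilon> > 0" by (rule eps)
  obtain C1 where C1: "\<And>x t. 0 \<le> t \<and> t \<le> 2 \<Longrightarrow> \<bar>u (x,t) - u (x,0)\<bar> \<le> C1"
    using uc_bound[OF uc] by blast
  obtain C2 where C2: "\<And>x t. 0 \<le> t \<and> t \<le> 2 \<Longrightarrow> \<bar>V (x,t) - (m * x + \<delta> * \<bar>x + \<alpha>\<bar>)\<bar> \<le> C2"
    using bar_bound[OF c1, of \<delta> 2] dpos unfolding V_def by fastforce
  have cont': "continuous_on (UNIV \<times> {0..}) (\<lambda>p. - u p)" using cont by (intro continuous_intros)
  have "(\<lambda>p. - u p) (0,1) \<le> (\<lambda>p. - V p) (0,1)"
  proof (rule comparison[where P = "\<lambda>pt px pxx. - pt + F (- px) - \<epsilon> * (- pxx) \<ge> 0" and T = 2 and \<rho> = \<rho>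
        and B = "C1 + C2" and wx = "\<lambda>p. - barx m \<delta> \<alpha> \<epsilon> (1/2) p"
        and wt = "\<lambda>p. - bart (- m * \<alpha> - \<beta> - \<gamma>) \<delta> \<alpha> \<epsilon> (1/2) (- (\<delta>/3) * sqrt \<epsilon>) (1/4) p"
        and wxx = "\<lambda>p. - barxx \<delta> \<alpha> \<epsilon> (1/2) p"])
    show "continuous_on (UNIV \<times> {0..}) (\<lambda>p. - u p)" by (rule cont')
    show "test_fun (\<lambda>p. - V p) (\<lambda>p. - barx m \<delta> \<alpha> \<epsilon> (1/2) p)
        (\<lambda>p. - bart (- m * \<alpha> - \<beta> - \<gamma>) \<delta> \<alpha> \<epsilon> (1/2) (- (\<delta>/3) * sqrt \<epsilon>) (1/4) p)
        (\<lambda>p. - barxx \<delta> \<alpha> \<epsilon> (1/2) p)"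
      unfolding V_def by (rule test_fun_neg[OF test_fun_bar[OF c1]])
    show "\<rho> > 0" by (rule rho)
    show "(0::real) < 1" "(1::real) < 2" by simp_all
    fix \<phi> \<phi>x \<phi>t \<phi>xx x0 and t0 :: real
    assume tf: "test_fun \<phi> \<phi>x \<phi>t \<phi>xx" and t0: "t0 > 0"
      and lm: "\<exists>r>0. \<forall>x t. t > 0 \<and> dist (x,t) (x0,t0) < r \<longrightarrow> - u (x,t) - \<phi> (x,t) \<le> - u (x0,t0) - \<phi> (x0,t0)"
    have tf': "test_fun (\<lambda>p. - \<phi> p) (\<lambda>p. - \<phi>x p) (\<lambda>p. - \<phi>t p) (\<lambda>p. - \<phi>xx p)"
      by (rule test_fun_neg[OF tf])
    obtain r where r: "r > 0" "\<And>x t. t > 0 \<and> dist (x,t) (x0,t0) < r \<Longrightarrow> - u (x,t) - \<phi> (x,t) \<le> - u (x0,t0) - \<phi> (x0,t0)"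
      using lm by blast
    have lm': "\<exists>r>0. \<forall>x t. t > 0 \<and> dist (x,t) (x0,t0) < r \<longrightarrow> u (x,t) - (- \<phi> (x,t)) \<ge> u (x0,t0) - (- \<phi> (x0,t0))"
    proof (intro exI[of _ r] conjI allI impI)
      fix x t assume "t > 0 \<and> dist (x,t) (x0,t0) < r"
      from r(2)[OF this] show "u (x,t) - (- \<phi> (x,t)) \<ge> u (x0,t0) - (- \<phi> (x0,t0))" by linarith
    qed (rule r(1))
    have "(- \<phi>t (x0,t0)) + F (- \<phi>x (x0,t0)) - \<epsilon> * (- \<phi>xx (x0,t0)) \<ge> 0"
      by (rule visc_super[OF sol tf' t0 lm'])
    then show "- \<phi>t (x0,t0) + F (- \<phi>x (x0,t0)) - \<epsilon> * (- \<phi>xx (x0,t0)) \<ge> 0" .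
  next
    fix x t d e' s :: real
    assume a: "0 < t" "t < 2" "\<bar>d\<bar> \<le> \<rho>" "\<bar>e'\<bar> \<le> \<rho>" "s \<ge> 0"
    define Y where "Y = bY \<alpha> (x,t)"
    define R where "R = bR \<alpha> \<epsilon> (1/2) (x,t)"
    define E where "E = exp (1/2 * t)"
    define g where "g = sqrt \<epsilon> * exp (1/4 * t)"
    have R: "R > 0" unfolding R_def by (rule bR_pos[OF c1])
    have RR: "R * R = Y * Y + \<epsilon> * E" unfolding R_def Y_def E_def using bR_RR[OF c1, of \<alpha> "1/2" "(x,t)"] by simp
    have YR: "\<bar>Y\<bar> \<le> R" unfolding R_def Y_def by (rule bR_ge[OF c1])
    have q: "\<bar>Y / R\<bar> \<le> 1" by (rule ratio_le1[OF R YR])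
    have E: "0 < E" "E \<le> 3"
    proof -
      show "0 < E" unfolding E_def by simp
      have "E \<le> exp 1" unfolding E_def using a(2) by simp
      thus "E \<le> 3" using exp_le by linarith
    qed
    have g: "g > 0" "g * g = \<epsilon> * E"
    proof -
      show "g > 0" unfolding g_def using c1 by simp
      have "sqrt \<epsilon> * sqrt \<epsilon> = \<epsilon>" using c1 by simp
      moreover have "exp (1/4 * t) * exp (1/4 * t) = E" unfolding E_def by (simp add: exp_add[symmetric])
      ultimately show "g * g = \<epsilon> * E" unfolding g_def by (metis mult.assoc mult.left_commute)
    qed
    have key: "\<epsilon> * E / (4 * R) - g / 12 - \<epsilon> * ((R - Y * (Y / R)) / (R * R)) \<le> 0"
      by (rule key_ineq[OF c1 E g R RR])
    have bx: "barx m \<delta> \<alpha> \<epsilon> (1/2) (x,t) = m + \<delta> * (Y / R)" unfolding barx_def Y_def R_def ..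
    have bt: "bart (- m * \<alpha> - \<beta> - \<gamma>) \<delta> \<alpha> \<epsilon> (1/2) (- (\<delta>/3) * sqrt \<epsilon>) (1/4) (x,t)
         = - m * \<alpha> - \<beta> - \<gamma> - \<alpha> * (\<delta> * (Y / R)) + \<delta> * (\<epsilon> * E / (4 * R) - g / 12)"
      unfolding bart_def Y_def[symmetric] R_def[symmetric] E_def[symmetric] g_def snd_conv using R
      by (simp add: field_simps)
    have bxx: "barxx \<delta> \<alpha> \<epsilon> (1/2) (x,t) = \<delta> * ((R - Y * (Y / R)) / (R * R))"
      unfolding barxx_def Y_def[symmetric] R_def[symmetric] ..
    have dd: "\<bar>- d\<bar> \<le> (b - a) / 8" using a(3) rho(2) \<delta> by simp
    have "m + \<delta> * (Y / R) + (- d) \<in> {a<..<b}" unfolding m \<delta> by (rule slope_in[OF ab q dd])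
    hence Fv: "F (m + \<delta> * (Y / R) - d) = \<alpha> * (m + \<delta> * (Y / R) - d) + \<beta>" using lin by simp
    have "\<bar>\<alpha> * d\<bar> = \<bar>\<alpha>\<bar> * \<bar>d\<bar>" by (rule abs_mult)
    also have "\<dots> \<le> \<bar>\<alpha>\<bar> * \<rho>" using a(3) by (intro mult_left_mono) auto
    finally have ad: "\<bar>\<alpha> * d\<bar> \<le> \<bar>\<alpha>\<bar> * \<rho>" .
    have "\<bar>\<epsilon> * e'\<bar> = \<epsilon> * \<bar>e'\<bar>" using c1 by (simp add: abs_mult)
    also have "\<dots> \<le> 1 * \<rho>" using eps a(4) by (intro mult_mono) auto
    finally have ee: "\<bar>\<epsilon> * e'\<bar> \<le> \<rho>" by simp
    have dk: "\<delta> * (\<epsilon> * E / (4 * R) - g / 12 - \<epsilon> * ((R - Y * (Y / R)) / (R * R))) \<le> 0"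
      using key dpos by (simp add: mult_nonneg_nonpos)
    have sum: "\<bar>\<alpha> * d\<bar> + \<bar>\<epsilon> * e'\<bar> < \<gamma>" using ad ee rho(3) by (simp add: algebra_simps)
    have eq: "- (- bart (- m * \<alpha> - \<beta> - \<gamma>) \<delta> \<alpha> \<epsilon> (1/2) (- (\<delta>/3) * sqrt \<epsilon>) (1/4) (x,t) + s)
          + F (- (- barx m \<delta> \<alpha> \<epsilon> (1/2) (x,t) + d))
          - \<epsilon> * (- (- barxx \<delta> \<alpha> \<epsilon> (1/2) (x,t) + e'))
         = - \<gamma> - s - \<alpha> * d + \<epsilon> * e' + \<delta> * (\<epsilon> * E / (4 * R) - g / 12 - \<epsilon> * ((R - Y * (Y / R)) / (R * R)))"
    proof -
      have hh: "- (- barx m \<delta> \<alpha> \<epsilon> (1/2) (x,t) + d) = m + \<delta> * (Y / R) - d" unfolding bx by simp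
      have Fe: "F (- (- barx m \<delta> \<alpha> \<epsilon> (1/2) (x,t) + d)) = \<alpha> * (m + \<delta> * (Y / R) - d) + \<beta>"
        unfolding hh by (rule Fv)
      show ?thesis unfolding Fe unfolding bt bxx by (simp add: algebra_simps)
    qed
    show "\<not> (- (- bart (- m * \<alpha> - \<beta> - \<gamma>) \<delta> \<alpha> \<epsilon> (1/2) (- (\<delta>/3) * sqrt \<epsilon>) (1/4) (x,t) + s)
          + F (- (- barx m \<delta> \<alpha> \<epsilon> (1/2) (x,t) + d))
          - \<epsilon> * (- (- barxx \<delta> \<alpha> \<epsilon> (1/2) (x,t) + e')) \<ge> 0)"
      unfolding eq using dk sum a(5) abs_ge_self[of "\<epsilon> * e'"] abs_ge_minus_self[of "\<alpha> * d"] by linarith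
  next
    fix x
    have "V (x,0) \<le> m * x + \<delta> * \<bar>x + \<alpha>\<bar>"
    proof -
      have "bR \<alpha> \<epsilon> (1/2) (x,0) = sqrt ((x + \<alpha>) * (x + \<alpha>) + \<epsilon>)" unfolding bR_def bQ_def bY_def by simp
      also have "\<dots> \<le> \<bar>x + \<alpha>\<bar> + sqrt \<epsilon>" using sqrt_plus_le2[of \<epsilon> "x + \<alpha>"] c1 by simp
      finally have "\<delta> * bR \<alpha> \<epsilon> (1/2) (x,0) \<le> \<delta> * (\<bar>x + \<alpha>\<bar> + sqrt \<epsilon>)" using dpos by (intro mult_left_mono) auto
      moreover have "V (x,0) = m * x - (2/3) * \<delta> * sqrt \<epsilon> + \<delta> * bR \<alpha> \<epsilon> (1/2) (x,0) - (\<delta>/3) * sqrt \<epsilon>"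
        unfolding V_def bar_def by simp
      ultimately show ?thesis by (simp add: algebra_simps)
    qed
    thus "- u (x,0) \<le> - V (x,0)" unfolding init by simp
  next
    fix x t :: real assume "0 \<le> t" "t < 2"
    then show "- u (x,t) - - V (x,t) \<le> C1 + C2" using C1[of t x] C2[of t x] init[of x] unfolding abs_le_iff by linarith
  qed
  hence "V (0,1) \<le> u (0,1)" by simp
  moreover have "V (0,1) = - m * \<alpha> - \<beta> - \<gamma> + \<delta> * (2/3) * (exp (1/4) - 1) * sqrt \<epsilon>"
  proof -
    have e4: "exp (1/2::real) = exp (1/4) * exp (1/4)" by (simp add: exp_add[symmetric])
    have "bR \<alpha> \<epsilon> (1/2) (0,1) = sqrt (\<epsilon> * exp (1/2))" unfolding bR_def bQ_def bY_def by simp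
    also have "\<dots> = sqrt \<epsilon> * exp (1/4)" unfolding e4 real_sqrt_mult by simp
    finally have "bR \<alpha> \<epsilon> (1/2) (0,1) = sqrt \<epsilon> * exp (1/4)" .
    thus ?thesis unfolding V_def bar_def by (simp add: algebra_simps)
  qed
  ultimately show ?thesis by simp
  qed
  show ?thesis by (rule field_le_epsilon) (rule main)
qed


theorem corollary1p4:
  fixes F :: "real \<Rightarrow> real" and a b :: real
  assumes "locally_lipschitz F"
    and "a < b"
    and "\<exists>\<alpha> \<beta>. \<forall>p\<in>{a<..<b}. F p = \<alpha> * p + \<beta>"
  shows "\<exists>(g :: real \<Rightarrow> real) c0. (\<exists>L. L-lipschitz_on UNIV g) \<and> c0 > 0 \<and>
           (\<forall>\<epsilon> u\<epsilon> u. 0 < \<epsilon> \<and> \<epsilon> < 1/4 \<and> visc_solution \<epsilon> F g u\<epsilon> \<and> visc_solution 0 F g u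
              \<longrightarrow> \<bar>u\<epsilon> (0, 1) - u (0, 1)\<bar> \<ge> c0 * sqrt \<epsilon>)"
proof -
  obtain \<alpha> \<beta> where lin: "\<forall>p\<in>{a<..<b}. F p = \<alpha> * p + \<beta>" using assms(3) by blast
  define m where "m = (a + b) / 2"
  define \<delta> where "\<delta> = (b - a) / 8"
  have dpos: "\<delta> > 0" using assms(2) by (simp add: \<delta>_def)
  define g where "g = (\<lambda>x. m * x + \<delta> * \<bar>x + \<alpha>\<bar>)"
  define c0 where "c0 = \<delta> * (2/3) * (exp (1/4) - 1)"
  have c0: "c0 > 0" using dpos by (simp add: c0_def)
  have lip: "(\<bar>m\<bar> + \<delta>)-lipschitz_on UNIV g"
  proof (rule lipschitz_onI)
    fix x y :: real
    have "\<bar>g x - g y\<bar> = \<bar>m * (x - y) + \<delta> * (\<bar>x + \<alpha>\<bar> - \<bar>y + \<alpha>\<bar>)\<bar>" by (simp add: g_def algebra_simps)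
    also have "\<dots> \<le> \<bar>m\<bar> * \<bar>x - y\<bar> + \<delta> * \<bar>x - y\<bar>"
    proof -
      have "\<bar>\<bar>x + \<alpha>\<bar> - \<bar>y + \<alpha>\<bar>\<bar> \<le> \<bar>x - y\<bar>" using abs_triangle_ineq3[of "x + \<alpha>" "y + \<alpha>"] by simp
      hence "\<bar>\<delta> * (\<bar>x + \<alpha>\<bar> - \<bar>y + \<alpha>\<bar>)\<bar> \<le> \<delta> * \<bar>x - y\<bar>" using dpos by (simp add: abs_mult)
      moreover have "\<bar>m * (x - y)\<bar> = \<bar>m\<bar> * \<bar>x - y\<bar>" by (rule abs_mult)
      ultimately show ?thesis using abs_triangle_ineq[of "m * (x - y)" "\<delta> * (\<bar>x + \<alpha>\<bar> - \<bar>y + \<alpha>\<bar>)"] by linarith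
    qed
    finally show "dist (g x) (g y) \<le> (\<bar>m\<bar> + \<delta>) * dist x y" by (simp add: dist_real_def algebra_simps)
  next
    show "0 \<le> \<bar>m\<bar> + \<delta>" using dpos by simp
  qed
  show ?thesis
  proof (rule exI[of _ g], rule exI[of _ c0], intro conjI allI impI)
    show "\<exists>L. L-lipschitz_on UNIV g" using lip by blast
    show "c0 > 0" by (rule c0)
    fix \<epsilon> u\<epsilon> u
    assume h: "0 < \<epsilon> \<and> \<epsilon> < 1/4 \<and> visc_solution \<epsilon> F g u\<epsilon> \<and> visc_solution 0 F g u"
    have up: "u (0,1) \<le> - m * \<alpha> - \<beta>"
      using upper_part[OF lin m_def \<delta>_def assms(2), of u] h unfolding g_def by blast
    have lo: "- m * \<alpha> - \<beta> + \<delta> * (2/3) * (exp (1/4) - 1) * sqrt \<epsilon> \<le> u\<epsilon> (0,1)"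
      using lower_part[OF lin m_def \<delta>_def assms(2), of \<epsilon> u\<epsilon>] h unfolding g_def by blast
    have "c0 * sqrt \<epsilon> \<le> u\<epsilon> (0, 1) - u (0, 1)" using up lo unfolding c0_def by linarith
    thus "c0 * sqrt \<epsilon> \<le> \<bar>u\<epsilon> (0, 1) - u (0, 1)\<bar>" by linarith
  qed
qed


end
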